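(* Let $\mathcal N=(\mathcal V,\mathcal R)$ be a non-autocatalytic reaction network on $n$ species, let $\mathbf k\in\mathbb R_{>0}^{\mathcal R}$ be rate constants and $\boldsymbol\tau\in\mathbb R_{\ge 0}^{\mathcal R}$ delay parameters, and let $\mathbf x^*\in\mathbb R^n_{>0}$ be an equilibrium of the delay mass action system $\mathcal N_{\boldsymbol\tau,\mathbf k}$. Let $J_\lambda=J_\lambda(\mathbf x^*,\mathbf k,\boldsymbol\tau)$, $J=J(\mathbf x^*,\mathbf k)$ and $\tilde J=\tilde J(\mathbf x^*,\mathbf k)$ be the matrices defined in the context. Suppose $\det J\neq 0$, $\tilde J_{ii}<0$ for all $i$, and $-\tilde J$ is a $P_0$-matrix. Then every root $\lambda\in\mathbb C$ of the characteristic equation $\det(J_\lambda-\lambda I)=0$ has negative real part.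
   Context: A reaction network $\mathcal N=(\mathcal V,\mathcal R)$ is a finite directed graph whose vertices (complexes) are vectors $\mathbf y\in\mathbb R^n_{\ge 0}$; each edge $\mathbf y\to\mathbf y'$ is a reaction. Species are identified with the standard basis vectors $\mathbf e_1,\dots,\mathbf e_n$. A reaction $\mathbf y\to\mathbf y'$ is autocatalytic if $\mathrm{supp}(\mathbf y)\cap\mathrm{supp}(\mathbf y')\neq\emptyset$ and $y_i'>y_i$ for every $i\in\mathrm{supp}(\mathbf y)\cap\mathrm{supp}(\mathbf y')$; the network is non-autocatalytic if it has no autocatalytic reactions. For $\mathbf x\in\mathbb R^n_{>0}$, write $\mathbf x^{\mathbf y}=\prod_i x_i^{y_i}$. Given rate constants $k_{\mathbf y\to\mathbf y'}>0$ and delays $\tau_{\mathbf y\to\mathbf y'}\ge 0$ (one per reaction), the delay mass action system $\mathcal N_{\boldsymbol\tau,\mathbf k}$ is $\dot{\mathbf x}(t)=\sum_{\mathbf y\to\mathbf y'\in\mathcal R}k_{\mathbf y\to\mathbf y'}[\mathbf x(t-\tau_{\mathbf y\to\mathbf y'})]^{\mathbf y}\mathbf y'-\sum_{\mathbf y\to\mathbf y'\in\mathcal R}k_{\mathbf y\to\mathbf y'}[\mathbf x(t)]^{\mathbf y}\mathbf y$; an equilibrium is a constant solution $\mathbf x^*\in\mathbb R^n_{>0}$. For $\mathbf x\in\mathbb R^n_{>0}$ and $\lambda\in\mathbb C$, define $n\times n$ matrices with entries (row $j$, column $i$): $(J_\lambda)_{ji}=\sum_{\mathbf y\to\mathbf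 y'\in\mathcal R}k_{\mathbf y\to\mathbf y'}\mathbf x^{\mathbf y}\frac{y_i}{x_i}\big(y'_j e^{-\lambda\tau_{\mathbf y\to\mathbf y'}}-y_j\big)$; $J_{ji}=\sum_{\mathbf y\to\mathbf y'}k_{\mathbf y\to\mathbf y'}\mathbf x^{\mathbf y}\frac{y_i}{x_i}(y'_j-y_j)$ (the Jacobian of the delay-free mass action system); and the modified Jacobian $\tilde J_{ji}=\sum_{\mathbf y\to\mathbf y'}k_{\mathbf y\to\mathbf y'}\mathbf x^{\mathbf y}\frac{y_i}{x_i}(y'_j+y_j)$ for $j\neq i$, and $\tilde J_{ii}=\sum_{\mathbf y\to\mathbf y'}k_{\mathbf y\to\mathbf y'}\mathbf x^{\mathbf y}\frac{y_i}{x_i}(y'_i-y_i)$. A real square matrix is a $P_0$-matrix if all its principal minors are non-negative. *)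

theory Defs
  imports "HOL-Analysis.Analysis"
begin

text \<open>Species are indexed by a finite type 'n (so n = CARD('n)); complexes are
  vectors in real^'n; a reaction is a pair (y, y') of complexes.\<close>

definition supp :: "real^'n \<Rightarrow> 'n set" where
  "supp y = {i. y $ i \<noteq> 0}"

definition reaction_network :: "(real^'n) set \<Rightarrow> ((real^'n) \<times> (real^'n)) set \<Rightarrow> bool" where
  "reaction_network V R \<longleftrightarrow> finite V \<and> R \<subseteq> V \<times> V
     \<and> (\<forall>y\<in>V. \<forall>i. y $ i \<ge> 0) \<and> (\<forall>(y, y')\<in>R. y \<noteq> y')"

definition autocatalytic :: "(real^'n) \<times> (real^'n) \<Rightarrow> bool" where
  "autocatalytic r \<longleftrightarrow> (case r of (y, y') \<Rightarrow>
     supp y \<inter> supp y' \<noteq> {} \<and> (\<forall>i\<in>supp y \<inter> supp y'. y' $ i > y $ i))"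

definition non_autocatalytic :: "((real^'n) \<times> (real^'n)) set \<Rightarrow> bool" where
  "non_autocatalytic R \<longleftrightarrow> (\<forall>r\<in>R. \<not> autocatalytic r)"

definition monom_vec :: "real^'n \<Rightarrow> real^'n \<Rightarrow> real" where
  "monom_vec x y = (\<Prod>i\<in>UNIV. (x $ i) powr (y $ i))"

text \<open>An equilibrium of the delay mass action system: a positive constant solution,
  i.e. a positive x at which the right-hand side (with x(t - tau) = x(t) = x) vanishes.\<close>
definition delay_equilibrium ::
  "((real^'n) \<times> (real^'n)) set \<Rightarrow> ((real^'n) \<times> (real^'n) \<Rightarrow> real)
   \<Rightarrow> ((real^'n) \<times> (real^'n) \<Rightarrow> real) \<Rightarrow> real^'n \<Rightarrow> bool" where
  "delay_equilibrium R k tau x \<longleftrightarrow> (\<forall>i. x $ i > 0) \<and>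
     (\<Sum>(y, y')\<in>R. (k (y, y') * monom_vec x y) *\<^sub>R y')
       - (\<Sum>(y, y')\<in>R. (k (y, y') * monom_vec x y) *\<^sub>R y) = 0"

definition J_lambda ::
  "((real^'n) \<times> (real^'n)) set \<Rightarrow> ((real^'n) \<times> (real^'n) \<Rightarrow> real)
   \<Rightarrow> ((real^'n) \<times> (real^'n) \<Rightarrow> real) \<Rightarrow> real^'n \<Rightarrow> complex \<Rightarrow> complex^'n^'n" where
  "J_lambda R k tau x z = (\<chi> j i. \<Sum>(y, y')\<in>R.
      of_real (k (y, y') * monom_vec x y * (y $ i / x $ i)) *
      (of_real (y' $ j) * exp (- z * of_real (tau (y, y'))) - of_real (y $ j)))"

definition J_mat ::
  "((real^'n) \<times> (real^'n)) set \<Rightarrow> ((real^'n) \<times> (real^'n) \<Rightarrow> real)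
   \<Rightarrow> real^'n \<Rightarrow> real^'n^'n" where
  "J_mat R k x = (\<chi> j i. \<Sum>(y, y')\<in>R.
      k (y, y') * monom_vec x y * (y $ i / x $ i) * (y' $ j - y $ j))"

definition J_tilde ::
  "((real^'n) \<times> (real^'n)) set \<Rightarrow> ((real^'n) \<times> (real^'n) \<Rightarrow> real)
   \<Rightarrow> real^'n \<Rightarrow> real^'n^'n" where
  "J_tilde R k x = (\<chi> j i. \<Sum>(y, y')\<in>R.
      k (y, y') * monom_vec x y * (y $ i / x $ i) *
      (if j = i then y' $ j - y $ j else y' $ j + y $ j))"

definition principal_minor :: "real^'n^'n \<Rightarrow> 'n set \<Rightarrow> real" where
  "principal_minor A S = (\<Sum>p\<in>{p. p permutes S}. of_int (sign p) * (\<Prod>i\<in>S. A $ i $ p i))"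

definition P0_matrix :: "real^'n^'n \<Rightarrow> bool" where
  "P0_matrix A \<longleftrightarrow> (\<forall>S. S \<noteq> {} \<longrightarrow> principal_minor A S \<ge> 0)"

end

theory Submission
  imports Defs
begin

lemma det_zero_ker:
  fixes A :: "'a::field^'n^'n"
  assumes "det A = 0" shows "\<exists>v. v \<noteq> 0 \<and> A *v v = 0"
  using assms invertible_det_nz[of A] invertible_left_inverse[of A] matrix_left_invertible_ker[of A]
  by blast

lemma minor_empty: "principal_minor A {} = 1"
  by (simp add: principal_minor_def)

lemma pad_det:
  fixes F :: "real^'n^'n"
  shows "det (\<chi> i j. if i \<in> S \<and> j \<in> S then F$i$j else if i = j then 1 else 0) = principal_minor F S"
    (is "det ?P = _")
proof -
  have fin: "finite {p. p permutes (UNIV::'n set)}" by (simp add: finite_permutations)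
  have sub: "{p. p permutes S} \<subseteq> {p. p permutes (UNIV::'n set)}"
    by (auto intro: permutes_subset)
  have "det ?P = (\<Sum>p\<in>{p. p permutes S}. of_int (sign p) * (\<Prod>i\<in>UNIV. ?P$i$p i))"
    unfolding det_def
  proof (rule sum.mono_neutral_right[OF fin sub])
    show "\<forall>p\<in>{p. p permutes UNIV} - {p. p permutes S}. of_int (sign p) * (\<Prod>i\<in>UNIV. ?P $ i $ p i) = 0"
    proof
      fix p assume p: "p \<in> {p. p permutes UNIV} - {p. p permutes S}"
      then have "\<exists>i. i \<notin> S \<and> p i \<noteq> i"
        by (auto simp: permutes_def)
      then obtain i where "i \<notin> S" "p i \<noteq> i" by blast
      then have "?P$i$p i = 0" by simp
      then have "(\<Prod>i\<in>UNIV. ?P $ i $ p i) = 0" by (meson UNIV_I finite prod_zero)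
      then show "of_int (sign p) * (\<Prod>i\<in>UNIV. ?P $ i $ p i) = 0" by simp
    qed
  qed
  also have "\<dots> = principal_minor F S"
    unfolding principal_minor_def
  proof (rule sum.cong[OF refl])
    fix p assume "p \<in> {p. p permutes S}"
    then have p: "p permutes S" by simp
    have "(\<Prod>i\<in>UNIV. ?P$i$p i) = (\<Prod>i\<in>S. ?P$i$p i) * (\<Prod>i\<in>UNIV - S. ?P$i$p i)"
      using prod.Int_Diff[of UNIV "\<lambda>i. ?P$i$p i" S] by simp
    also have "(\<Prod>i\<in>UNIV - S. ?P$i$p i) = 1"
      by (rule prod.neutral) (auto simp: permutes_not_in[OF p])
    also have "(\<Prod>i\<in>S. ?P$i$p i) = (\<Prod>i\<in>S. F$i$p i)"
      by (rule prod.cong) (auto simp: permutes_in_image[OF p])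
    finally show "of_int (sign p) * (\<Prod>i\<in>UNIV. ?P$i$p i) = of_int (sign p) * (\<Prod>i\<in>S. F$i$p i)" by simp
  qed
  finally show ?thesis .
qed

lemma minor_split:
  fixes B :: "real^'n^'n"
  assumes U: "U \<subseteq> S"
  shows "(\<Sum>p\<in>{p. p permutes S}. of_int (sign p) *
     ((\<Prod>i\<in>U. if i = p i then e i else 0) * (\<Prod>i\<in>S - U. B$i$p i)))
   = (\<Prod>i\<in>U. e i) * principal_minor B (S - U)"
proof -
  have fin: "finite {p. p permutes S}" by (simp add: finite_permutations)
  have sub: "{p. p permutes (S - U)} \<subseteq> {p. p permutes S}"
    by (auto intro: permutes_subset)
  have "(\<Sum>p\<in>{p. p permutes S}. of_int (sign p) *
     ((\<Prod>i\<in>U. if i = p i then e i else 0) * (\<Prod>i\<in>S - U. B$i$p i)))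
    = (\<Sum>p\<in>{p. p permutes (S - U)}. of_int (sign p) *
     ((\<Prod>i\<in>U. if i = p i then e i else 0) * (\<Prod>i\<in>S - U. B$i$p i)))"
  proof (rule sum.mono_neutral_right[OF fin sub], rule ballI)
    fix p assume p: "p \<in> {p. p permutes S} - {p. p permutes (S - U)}"
    then have "\<exists>i. i \<in> U \<and> p i \<noteq> i"
      by (auto simp: permutes_def)
    then obtain i where "i \<in> U" "p i \<noteq> i" by blast
    have "(\<Prod>i\<in>U. if i = p i then e i else 0) = 0"
      by (rule prod_zero) (use \<open>i \<in> U\<close> \<open>p i \<noteq> i\<close> in \<open>auto intro!: bexI[where x=i]\<close>)
    then show "of_int (sign p) *
     ((\<Prod>i\<in>U. if i = p i then e i else 0) * (\<Prod>i\<in>S - U. B$i$p i)) = 0" by simp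
  qed
  also have "\<dots> = (\<Sum>p\<in>{p. p permutes (S - U)}. (\<Prod>i\<in>U. e i) * (of_int (sign p) *
      (\<Prod>i\<in>S - U. B$i$p i)))"
  proof (rule sum.cong[OF refl])
    fix p assume "p \<in> {p. p permutes (S - U)}"
    then have p: "p permutes (S - U)" by simp
    have "(\<Prod>i\<in>U. if i = p i then e i else 0) = (\<Prod>i\<in>U. e i)"
      by (rule prod.cong) (auto simp: permutes_not_in[OF p])
    then show "of_int (sign p) *
     ((\<Prod>i\<in>U. if i = p i then e i else 0) * (\<Prod>i\<in>S - U. B$i$p i)) =
      (\<Prod>i\<in>U. e i) * (of_int (sign p) * (\<Prod>i\<in>S - U. B$i$p i))" by simp
  qed
  also have "\<dots> = (\<Prod>i\<in>U. e i) * principal_minor B (S - U)"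
    unfolding principal_minor_def by (simp add: sum_distrib_left)
  finally show ?thesis .
qed

lemma minor_diag_ge:
  fixes B :: "real^'n^'n"
  assumes P0: "P0_matrix B" and e: "\<forall>i\<in>S. e i > 0"
  shows "principal_minor (\<chi> i j. B$i$j + (if i = j then e i else 0)) S \<ge> (\<Prod>i\<in>S. e i)"
proof -
  let ?F = "(\<chi> i j. B$i$j + (if i = j then e i else 0)) :: real^'n^'n"
  have "principal_minor ?F S = (\<Sum>p\<in>{p. p permutes S}. of_int (sign p) *
      (\<Sum>U\<in>Pow S. (\<Prod>i\<in>U. if i = p i then e i else 0) * (\<Prod>i\<in>S - U. B$i$p i)))"
    unfolding principal_minor_def
  proof (rule sum.cong[OF refl])
    fix p
    have "(\<Prod>i\<in>S. ?F$i$p i) = (\<Prod>i\<in>S. (if i = p i then e i else 0) + B$i$p i)"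
      by (simp add: add.commute)
    also have "\<dots> = (\<Sum>U\<in>Pow S. (\<Prod>i\<in>U. if i = p i then e i else 0) * (\<Prod>i\<in>S - U. B$i$p i))"
      by (rule prod_add) simp
    finally show "of_int (sign p) * (\<Prod>i\<in>S. ?F$i$p i) = of_int (sign p) *
      (\<Sum>U\<in>Pow S. (\<Prod>i\<in>U. if i = p i then e i else 0) * (\<Prod>i\<in>S - U. B$i$p i))" by simp
  qed
  also have "\<dots> = (\<Sum>U\<in>Pow S. \<Sum>p\<in>{p. p permutes S}. of_int (sign p) *
      ((\<Prod>i\<in>U. if i = p i then e i else 0) * (\<Prod>i\<in>S - U. B$i$p i)))"
    unfolding sum_distrib_left by (rule sum.swap)
  also have "\<dots> = (\<Sum>U\<in>Pow S. (\<Prod>i\<in>U. e i) * principal_minor B (S - U))"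
    by (rule sum.cong[OF refl]) (rule minor_split, simp)
  finally have eq: "principal_minor ?F S = (\<Sum>U\<in>Pow S. (\<Prod>i\<in>U. e i) * principal_minor B (S - U))" .
  have "(\<Prod>i\<in>S. e i) = (\<Prod>i\<in>S. e i) * principal_minor B (S - S)"
    by (simp add: minor_empty)
  also have "\<dots> \<le> (\<Sum>U\<in>Pow S. (\<Prod>i\<in>U. e i) * principal_minor B (S - U))"
  proof (rule member_le_sum[where f = "\<lambda>U. (\<Prod>i\<in>U. e i) * principal_minor B (S - U)"])
    show "S \<in> Pow S" by simp
    show "finite (Pow S)" by simp
    fix U assume U: "U \<in> Pow S - {S}"
    then have "S - U \<noteq> {}" by auto
    then have "principal_minor B (S - U) \<ge> 0" using P0 unfolding P0_matrix_def by auto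
    moreover have "(\<Prod>i\<in>U. e i) \<ge> 0" using U e by (intro prod_nonneg) (auto simp: less_imp_le)
    ultimately show "0 \<le> (\<Prod>i\<in>U. e i) * principal_minor B (S - U)" by simp
  qed
  finally show ?thesis using eq by simp
qed

lemma P0_no_neg:
  fixes B :: "real^'n^'n" and u :: "real^'n"
  assumes P0: "P0_matrix B" and u0: "\<forall>i. u$i \<ge> 0" and unz: "u \<noteq> 0"
    and neg: "\<forall>i. u$i > 0 \<longrightarrow> (B *v u)$i < 0"
  shows False
proof -
  define S where "S = {i. u$i > 0}"
  define e where "e i = - (B *v u)$i / u$i" for i
  define F :: "real^'n^'n" where "F = (\<chi> i j. B$i$j + (if i = j then e i else 0))"
  define P :: "real^'n^'n" where "P = (\<chi> i j. if i \<in> S \<and> j \<in> S then F$i$j else if i = j then 1 else 0)"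
  have epos: "\<forall>i\<in>S. e i > 0"
    using neg by (auto simp: S_def e_def divide_neg_pos)
  have uz: "u$i = 0" if "i \<notin> S" for i using u0[rule_format, of i] that unfolding S_def by auto
  have "P *v u = 0"
  proof (rule vec_eq_iff[THEN iffD2], rule allI)
    fix j
    show "(P *v u)$j = 0$j"
    proof (cases "j \<in> S")
      case True
      have "(P *v u)$j = (\<Sum>i\<in>UNIV. F$j$i * u$i)"
        unfolding matrix_vector_mult_def P_def using True uz by (auto intro!: sum.cong)
      also have "\<dots> = (\<Sum>i\<in>UNIV. B$j$i * u$i + (if j = i then e j * u$i else 0))"
        unfolding F_def by (intro sum.cong) (auto simp: distrib_right)
      also have "\<dots> = (\<Sum>i\<in>UNIV. B$j$i * u$i) + e j * u$j"
        by (simp add: sum.distrib)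
      also have "\<dots> = 0"
        using True unfolding e_def S_def by (simp add: matrix_vector_mult_def)
      finally show ?thesis by simp
    next
      case False
      have "(P *v u)$j = (\<Sum>i\<in>UNIV. (if j = i then u$i else 0))"
        unfolding matrix_vector_mult_def P_def using False by (simp add: if_distrib[of "\<lambda>a. a * _"] cong: if_cong)
      also have "\<dots> = u$j" by simp
      finally show ?thesis using uz False by simp
    qed
  qed
  then have "det P = 0"
    using unz invertible_det_nz[of P] invertible_left_inverse[of P] matrix_left_invertible_ker[of P]
    by blast
  then have "principal_minor F S = 0" using pad_det[of S F] unfolding P_def by simp
  moreover have "principal_minor F S \<ge> (\<Prod>i\<in>S. e i)"
    unfolding F_def by (rule minor_diag_ge[OF P0 epos])
  moreover have "(\<Prod>i\<in>S. e i) > 0" using epos by (simp add: prod_pos)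
  ultimately show False by simp
qed

lemma comparison:
  fixes M :: "complex^'n^'n" and T :: "real^'n^'n"
  assumes off: "\<forall>j i. i \<noteq> j \<longrightarrow> cmod (M$j$i) \<le> T$j$i"
    and dg: "\<forall>j. cmod (M$j$j) > - T$j$j"
    and d0: "det M = 0" and P0: "P0_matrix (-T)"
  shows False
proof -
  obtain v where v: "v \<noteq> 0" "M *v v = 0"
    using d0 invertible_det_nz[of M] invertible_left_inverse[of M] matrix_left_invertible_ker[of M]
    by blast
  define u :: "real^'n" where "u = (\<chi> i. cmod (v$i))"
  have u0: "\<forall>i. u$i \<ge> 0" by (simp add: u_def)
  have unz: "u \<noteq> 0" using v(1) by (auto simp: u_def vec_eq_iff)
  have "(-T *v u)$j < 0" if uj: "u$j > 0" for j
  proof -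
    have "(\<Sum>i\<in>UNIV. M$j$i * v$i) = 0"
      using v(2) by (auto simp: vec_eq_iff matrix_vector_mult_def)
    moreover have "(\<Sum>i\<in>UNIV. M$j$i * v$i) = M$j$j * v$j + (\<Sum>i\<in>UNIV-{j}. M$j$i * v$i)"
      by (simp add: sum.remove)
    ultimately have "M$j$j * v$j = - (\<Sum>i\<in>UNIV-{j}. M$j$i * v$i)" by (simp add: eq_neg_iff_add_eq_0)
    then have "cmod (M$j$j * v$j) = cmod (\<Sum>i\<in>UNIV-{j}. M$j$i * v$i)"
      by (metis norm_minus_cancel)
    then have "cmod (M$j$j) * u$j = cmod (\<Sum>i\<in>UNIV-{j}. M$j$i * v$i)"
      by (simp add: u_def norm_mult)
    also have "\<dots> \<le> (\<Sum>i\<in>UNIV-{j}. cmod (M$j$i) * u$i)"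
      by (rule order_trans[OF norm_sum]) (simp add: u_def norm_mult)
    also have "\<dots> \<le> (\<Sum>i\<in>UNIV-{j}. T$j$i * u$i)"
      using off by (intro sum_mono mult_right_mono) (auto simp: u_def)
    finally have A: "cmod (M$j$j) * u$j \<le> (\<Sum>i\<in>UNIV-{j}. T$j$i * u$i)" .
    have B: "- T$j$j * u$j < cmod (M$j$j) * u$j"
      using dg uj by (intro mult_strict_right_mono) auto
    have "(-T *v u)$j = - T$j$j * u$j - (\<Sum>i\<in>UNIV-{j}. T$j$i * u$i)"
      by (simp add: matrix_vector_mult_def sum.remove sum_negf)
    then show ?thesis using A B by simp
  qed
  then show False using P0_no_neg[OF P0 u0 unz] by blast
qed

lemma det_of_real:
  fixes A :: "real^'n^'n"
  shows "det (\<chi> i j. complex_of_real (A$i$j)) = complex_of_real (det A)"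
  unfolding det_def by (simp add: of_real_sum of_real_prod)

lemma term_bound:
  fixes E :: complex
  assumes "a \<ge> 0" "b \<ge> 0" "c \<ge> 0" "cmod E \<le> 1"
  shows "cmod (of_real a * (of_real b * E - of_real c)) \<le> a * (b + c)"
proof -
  have "cmod (of_real b * E - of_real c) \<le> cmod (of_real b * E) + cmod (of_real c)"
    by (rule norm_triangle_ineq4)
  also have "\<dots> \<le> b + c"
    using assms by (simp add: norm_mult mult_left_le)
  finally show ?thesis using assms by (simp add: norm_mult mult_left_mono)
qed

lemma diag_bound:
  fixes E :: "'r \<Rightarrow> complex" and z :: complex
  assumes fin: "finite R" and A: "\<forall>r\<in>R. A r \<ge> 0" and b: "\<forall>r\<in>R. b r \<ge> 0"
    and E: "\<forall>r\<in>R. cmod (E r) \<le> 1" and z: "Re z \<ge> 0" "z \<noteq> 0"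
  shows "cmod ((\<Sum>r\<in>R. of_real (A r) * (of_real (b r) * E r - of_real (c r))) - z)
     > - (\<Sum>r\<in>R. A r * (b r - c r))"
proof -
  define w where "w = z + (\<Sum>r\<in>R. of_real (A r) * (of_real (c r) - of_real (b r) * E r))"
  have mw: "cmod ((\<Sum>r\<in>R. of_real (A r) * (of_real (b r) * E r - of_real (c r))) - z) = cmod w"
  proof -
    have "(\<Sum>r\<in>R. of_real (A r) * (of_real (b r) * E r - of_real (c r))) - z = - w"
      unfolding w_def by (simp add: sum_negf[symmetric] algebra_simps)
    then show ?thesis by simp
  qed
  define D where "D = (\<Sum>r\<in>R. A r * (c r - b r))"
  define s where "s = (\<Sum>r\<in>R. A r * b r * (1 - Re (E r)))"
  have ReE: "Re (E r) \<le> 1" if "r \<in> R" for r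
    using E that abs_Re_le_cmod[of "E r"] by auto
  have s0: "s \<ge> 0" unfolding s_def using A b ReE by (intro sum_nonneg) auto
  have Rew: "Re w = Re z + D + s"
    unfolding w_def D_def s_def by (simp add: algebra_simps sum.distrib[symmetric] sum_subtractf[symmetric])
  have Imw: "Im w = Im z - (\<Sum>r\<in>R. A r * b r * Im (E r))"
    unfolding w_def by (simp add: algebra_simps sum_negf)
  have goalD: "- (\<Sum>r\<in>R. A r * (b r - c r)) = D"
    unfolding D_def by (simp add: sum_negf[symmetric] algebra_simps)
  show ?thesis
  proof (cases "Re z + s > 0")
    case True
    then have "Re w > D" using Rew by simp
    then show ?thesis using mw goalD complex_Re_le_cmod[of w] by linarith
  next
    case False
    then have rz: "Re z = 0" and ss: "s = 0" using z s0 by auto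
    have "\<forall>r\<in>R. A r * b r * (1 - Re (E r)) = 0"
      using ss unfolding s_def using A b ReE
      by (subst sum_nonneg_eq_0_iff[symmetric]) (auto simp: fin)
    then have "\<forall>r\<in>R. A r * b r * Im (E r) = 0"
    proof (intro ballI)
      fix r assume "\<forall>r\<in>R. A r * b r * (1 - Re (E r)) = 0" "r \<in> R"
      then have h: "A r * b r = 0 \<or> Re (E r) = 1" by auto
      have "(Re (E r))\<^sup>2 + (Im (E r))\<^sup>2 \<le> 1"
        using E \<open>r \<in> R\<close> by (metis cmod_power2 norm_ge_zero power_le_one)
      then show "A r * b r * Im (E r) = 0" using h by auto
    qed
    then have "Im w = Im z" unfolding Imw by (simp add: sum.neutral)
    moreover have "Im z \<noteq> 0" using rz z(2) complex_eq_iff by auto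
    ultimately have "Im w \<noteq> 0" by simp
    then have "(Re w)\<^sup>2 < (Re w)\<^sup>2 + (Im w)\<^sup>2" by simp
    then have "sqrt ((Re w)\<^sup>2) < sqrt ((Re w)\<^sup>2 + (Im w)\<^sup>2)" by (rule real_sqrt_less_mono)
    then have "cmod w > \<bar>Re w\<bar>" by (simp add: cmod_def)
    then show ?thesis using mw goalD Rew rz ss by simp
  qed
qed

theorem theorem1:
  fixes V :: "(real^'n) set"
    and R :: "((real^'n) \<times> (real^'n)) set"
    and k tau :: "(real^'n) \<times> (real^'n) \<Rightarrow> real"
    and x :: "real^'n"
  assumes "reaction_network V R"
    and "non_autocatalytic R"
    and "\<forall>r\<in>R. k r > 0"
    and "\<forall>r\<in>R. tau r \<ge> 0"
    and "delay_equilibrium R k tau x"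
    and "det (J_mat R k x) \<noteq> 0"
    and "\<forall>i. J_tilde R k x $ i $ i < 0"
    and "P0_matrix (- J_tilde R k x)"
  shows "\<forall>z::complex. det (J_lambda R k tau x z - mat z) = 0 \<longrightarrow> Re z < 0"
proof (intro allI impI)
  fix z :: complex assume dz: "det (J_lambda R k tau x z - mat z) = 0"
  note rn = assms(1)[unfolded reaction_network_def]
  have finR: "finite R" using rn finite_subset by (metis finite_cartesian_product)
  have nonneg: "fst r $ i \<ge> 0" "snd r $ i \<ge> 0" if "r \<in> R" for r i
    using rn that by (auto simp: subset_iff)
  have xpos: "x$i > 0" for i using assms(5) unfolding delay_equilibrium_def by auto
  have mpos: "monom_vec x y > 0" for y
    unfolding monom_vec_def using xpos by (intro prod_pos) (metis less_irrefl powr_gt_zero)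
  define A where "A i r = k r * monom_vec x (fst r) * (fst r $ i / x $ i)" for i r
  have A0: "A i r \<ge> 0" if "r \<in> R" for i r
    unfolding A_def using assms(3) that mpos[of "fst r"] nonneg[OF that, of i] xpos[of i]
    by (intro mult_nonneg_nonneg divide_nonneg_pos) auto
  define E where "E r = exp (- z * of_real (tau r))" for r
  have Jl: "J_lambda R k tau x z $ j $ i
     = (\<Sum>r\<in>R. of_real (A i r) * (of_real (snd r $ j) * E r - of_real (fst r $ j)))" for i j
    unfolding J_lambda_def A_def E_def by (simp add: split_def)
  have Jt: "J_tilde R k x $ j $ i
     = (\<Sum>r\<in>R. A i r * (if j = i then snd r $ j - fst r $ j else snd r $ j + fst r $ j))" for i j
    unfolding J_tilde_def A_def by (simp add: split_def)
  show "Re z < 0"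
  proof (rule ccontr)
    assume "\<not> Re z < 0"
    then have rz: "Re z \<ge> 0" by simp
    have Enorm: "\<forall>r\<in>R. cmod (E r) \<le> 1"
    proof
      fix r assume "r \<in> R"
      then have "tau r \<ge> 0" using assms(4) by auto
      then have "Re (- z * of_real (tau r)) \<le> 0" using rz by (simp add: mult_nonneg_nonneg)
      then show "cmod (E r) \<le> 1" unfolding E_def by (simp add: norm_exp_eq_Re)
    qed
    show False
    proof (cases "z = 0")
      case True
      have "J_lambda R k tau x z - mat z = (\<chi> i j. complex_of_real (J_mat R k x $ i $ j))"
        using True by (simp add: vec_eq_iff J_lambda_def J_mat_def split_def of_real_sum)
      then have "det (J_lambda R k tau x z - mat z) = complex_of_real (det (J_mat R k x))"
        by (simp add: det_of_real)
      then show False using dz assms(6) by simp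
    next
      case False
      show False
      proof (rule comparison[of "J_lambda R k tau x z - mat z" "J_tilde R k x"])
        show "det (J_lambda R k tau x z - mat z) = 0" by (rule dz)
        show "P0_matrix (- J_tilde R k x)" by (rule assms(8))
        show "\<forall>j i. i \<noteq> j \<longrightarrow> cmod ((J_lambda R k tau x z - mat z) $ j $ i) \<le> J_tilde R k x $ j $ i"
        proof (intro allI impI)
          fix j i :: 'n assume ij: "i \<noteq> j"
          have "cmod ((J_lambda R k tau x z - mat z) $ j $ i)
             = cmod (\<Sum>r\<in>R. of_real (A i r) * (of_real (snd r $ j) * E r - of_real (fst r $ j)))"
            using ij by (simp add: Jl mat_def)
          also have "\<dots> \<le> (\<Sum>r\<in>R. cmod (of_real (A i r) * (of_real (snd r $ j) * E r - of_real (fst r $ j))))"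
            by (rule norm_sum)
          also have "\<dots> \<le> (\<Sum>r\<in>R. A i r * (snd r $ j + fst r $ j))"
            using A0 nonneg Enorm by (intro sum_mono term_bound) auto
          also have "\<dots> = J_tilde R k x $ j $ i" using ij by (simp add: Jt)
          finally show "cmod ((J_lambda R k tau x z - mat z) $ j $ i) \<le> J_tilde R k x $ j $ i" .
        qed
        show "\<forall>j. cmod ((J_lambda R k tau x z - mat z) $ j $ j) > - J_tilde R k x $ j $ j"
        proof
          fix j :: 'n
          have "(J_lambda R k tau x z - mat z) $ j $ j
             = (\<Sum>r\<in>R. of_real (A j r) * (of_real (snd r $ j) * E r - of_real (fst r $ j))) - z"
            by (simp add: Jl mat_def)
          moreover have "J_tilde R k x $ j $ j = (\<Sum>r\<in>R. A j r * (snd r $ j - fst r $ j))"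
            by (simp add: Jt)
          moreover have "cmod ((\<Sum>r\<in>R. of_real (A j r) * (of_real (snd r $ j) * E r - of_real (fst r $ j))) - z)
             > - (\<Sum>r\<in>R. A j r * (snd r $ j - fst r $ j))"
            using finR A0 nonneg Enorm rz False by (intro diag_bound) auto
          ultimately show "cmod ((J_lambda R k tau x z - mat z) $ j $ j) > - J_tilde R k x $ j $ j" by simp
        qed
      qed
    qed
  qed
qed

end
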